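(* Let $k$ be an algebraically closed field of characteristic $0$, $\alpha\in k$ with $\alpha(1-\alpha^2)\neq 0$, and let $\mathcal L_1,\mathcal L_2,\mathcal L_3,\mathcal L_4,\mathcal L_{5a},\mathcal L_{5b},\mathcal L_{6a},\mathcal L_{6b}\subset\mathbb P^5$ be the curves defined in the context (the irreducible components of the line scheme of $A(\alpha)$). Then these components intersect at twenty distinct points. The pairs meeting in exactly one point are \[ \mathcal L_2\cap\mathcal L_3=\mathcal L_2\cap\mathcal L_4=\mathcal L_3\cap\mathcal L_4=\{E_2\},\quad \mathcal L_3\cap\mathcal L_{5a}=\{E_3\},\quad \mathcal L_4\cap\mathcal L_{6a}=\{E_4\},\quad \mathcal L_{5a}\cap\mathcal L_{6a}=\{E_5\}; \] the pairs meeting in two distinct points are \[ \begin{aligned} &\mathcal L_1\cap\mathcal L_3=\{(1,0,\pm i,0,0,0)\}, && \mathcal L_2\cap\mathcal L_{5b}=\{(0,0,0,0,a,\pm ib)\},\\ &\mathcal L_1\cap\mathcal L_4=\{(0,0,0,\alpha,0,1\pm d)\}, && \mathcal L_2\cap\mathcal L_{6b}=\{(b,0,0,0,\pm i,0)\},\\ &\mathcal L_1\cap\mathcal L_{5b}=\{(0,0,\pm ia,0,0,1)\}, && \mathcal L_{5a}\cap\mathcal L_{5b}=\{(0,0,b,0,\pm i,0)\},\\ &\mathcal L_1\cap\mathcal L_{6b}=\{(\pm ia,0,0,1,0,0)\}, && \mathcal L_{6a}\cap\mathcal L_{6b}=\{(0,0,0,b,\pm ia,0)\}, \end{aligned} \]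 where $i,a,b,d\in k$ satisfy $i^2=-1$, $a^2=\alpha$, $b^2=2$, $d^2=1-\alpha^2$; and all other pairwise intersections are empty.
   Context: Points of $\mathbb P^5$ are written in homogeneous coordinates $(M_{12},M_{13},M_{14},M_{23},M_{24},M_{34})$, and $E_j$ denotes the point whose $j$-th coordinate is $1$ and all others $0$. With $\mathcal V(S)$ the zero locus of $S$: $\mathcal L_1=\mathcal V(M_{13},M_{24},M_{12}M_{34}+M_{14}M_{23},M_{12}^2+M_{14}^2+\alpha M_{23}^2-2M_{23}M_{34}+\alpha M_{34}^2)$; $\mathcal L_2=\mathcal V(M_{14},M_{23},M_{12}M_{34}-M_{13}M_{24},M_{12}^2+2M_{24}^2+\alpha M_{34}^2)$; $\mathcal L_3=\mathcal V(M_{23},M_{24},M_{34},M_{12}^3-M_{13}^2M_{14}+M_{12}M_{14}^2)$; $\mathcal L_4=\mathcal V(M_{12},M_{14},M_{24},M_{13}^2M_{23}-\alpha M_{23}^2M_{34}+2M_{23}M_{34}^2-\alpha M_{34}^3)$; $\mathcal L_{5a}=\mathcal V(M_{12},M_{13},M_{23},M_{34})$; $\mathcal L_{5b}=\mathcal V(M_{12},M_{13},M_{23},M_{14}^2+2M_{24}^2+\alpha M_{34}^2)$; $\mathcal L_{6a}=\mathcal V(M_{12},M_{13},M_{14},M_{34})$; $\mathcal L_{6b}=\mathcal V(M_{13},M_{14},M_{34},M_{12}^2+\alpha M_{23}^2+2M_{24}^2)$. (These are the irreducible components of the line scheme of the algebra $A(\alpha)$ on generators $x_1,\dots,x_4$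 with relations $x_3x_1+x_1x_3=0$, $x_3x_2-x_2x_3=0$, $2x_2^2+\alpha x_3^2=x_1^2$, $x_4x_1+x_1x_4=0$, $x_2^2-x_4^2=0$, $x_4x_2+x_2x_4=x_3^2$.) *)

theory Defs
  imports "HOL-Computational_Algebra.Polynomial"
begin

definition alg_closed :: "'a::field itself \<Rightarrow> bool" where
  "alg_closed (T :: 'a itself) \<longleftrightarrow>
     (\<forall>p :: 'a poly. degree p \<ge> 1 \<longrightarrow> (\<exists>x. poly p x = 0))"

text \<open>Homogeneous coordinates (M12, M13, M14, M23, M24, M34) of a point of P^5.\<close>
datatype 'a pt6 = P6 (M12: 'a) (M13: 'a) (M14: 'a) (M23: 'a) (M24: 'a) (M34: 'a)

definition zero6 :: "'a::zero pt6" where "zero6 = P6 0 0 0 0 0 0"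

definition scale6 :: "'a::times \<Rightarrow> 'a pt6 \<Rightarrow> 'a pt6" where
  "scale6 c v = P6 (c * M12 v) (c * M13 v) (c * M14 v) (c * M23 v) (c * M24 v) (c * M34 v)"

definition peq :: "'a::field pt6 \<Rightarrow> 'a pt6 \<Rightarrow> bool" where
  "peq u v \<longleftrightarrow> (\<exists>c. c \<noteq> 0 \<and> u = scale6 c v)"

definition pclass :: "'a::field pt6 \<Rightarrow> 'a pt6 set" where
  "pclass v = {w. w \<noteq> zero6 \<and> peq w v}"

definition E :: "nat \<Rightarrow> 'a::zero_neq_one pt6" where
  "E j = P6 (if j = 1 then 1 else 0) (if j = 2 then 1 else 0) (if j = 3 then 1 else 0)
            (if j = 4 then 1 else 0) (if j = 5 then 1 else 0) (if j = 6 then 1 else 0)"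

text \<open>The components, as sets of nonzero representatives (all equations homogeneous).\<close>
definition L1 :: "'a::field \<Rightarrow> 'a pt6 set" where
  "L1 \<alpha> = {v. v \<noteq> zero6 \<and> M13 v = 0 \<and> M24 v = 0 \<and> M12 v * M34 v + M14 v * M23 v = 0 \<and>
     M12 v ^ 2 + M14 v ^ 2 + \<alpha> * M23 v ^ 2 - 2 * M23 v * M34 v + \<alpha> * M34 v ^ 2 = 0}"

definition L2 :: "'a::field \<Rightarrow> 'a pt6 set" where
  "L2 \<alpha> = {v. v \<noteq> zero6 \<and> M14 v = 0 \<and> M23 v = 0 \<and> M12 v * M34 v - M13 v * M24 v = 0 \<and>
     M12 v ^ 2 + 2 * M24 v ^ 2 + \<alpha> * M34 v ^ 2 = 0}"

definition L3 :: "'a::field \<Rightarrow> 'a pt6 set" where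
  "L3 \<alpha> = {v. v \<noteq> zero6 \<and> M23 v = 0 \<and> M24 v = 0 \<and> M34 v = 0 \<and>
     M12 v ^ 3 - M13 v ^ 2 * M14 v + M12 v * M14 v ^ 2 = 0}"

definition L4 :: "'a::field \<Rightarrow> 'a pt6 set" where
  "L4 \<alpha> = {v. v \<noteq> zero6 \<and> M12 v = 0 \<and> M14 v = 0 \<and> M24 v = 0 \<and>
     M13 v ^ 2 * M23 v - \<alpha> * M23 v ^ 2 * M34 v + 2 * M23 v * M34 v ^ 2 - \<alpha> * M34 v ^ 3 = 0}"

definition L5a :: "'a::field \<Rightarrow> 'a pt6 set" where
  "L5a \<alpha> = {v. v \<noteq> zero6 \<and> M12 v = 0 \<and> M13 v = 0 \<and> M23 v = 0 \<and> M34 v = 0}"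

definition L5b :: "'a::field \<Rightarrow> 'a pt6 set" where
  "L5b \<alpha> = {v. v \<noteq> zero6 \<and> M12 v = 0 \<and> M13 v = 0 \<and> M23 v = 0 \<and>
     M14 v ^ 2 + 2 * M24 v ^ 2 + \<alpha> * M34 v ^ 2 = 0}"

definition L6a :: "'a::field \<Rightarrow> 'a pt6 set" where
  "L6a \<alpha> = {v. v \<noteq> zero6 \<and> M12 v = 0 \<and> M13 v = 0 \<and> M14 v = 0 \<and> M34 v = 0}"

definition L6b :: "'a::field \<Rightarrow> 'a pt6 set" where
  "L6b \<alpha> = {v. v \<noteq> zero6 \<and> M13 v = 0 \<and> M14 v = 0 \<and> M34 v = 0 \<and>
     M12 v ^ 2 + \<alpha> * M23 v ^ 2 + 2 * M24 v ^ 2 = 0}"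

definition comps :: "'a::field \<Rightarrow> 'a pt6 set list" where
  "comps \<alpha> = [L1 \<alpha>, L2 \<alpha>, L3 \<alpha>, L4 \<alpha>, L5a \<alpha>, L5b \<alpha>, L6a \<alpha>, L6b \<alpha>]"

definition intersection_pts :: "'a::field \<Rightarrow> 'a pt6 set" where
  "intersection_pts \<alpha> =
     (\<Union>j<8. \<Union>k<8. if j < k then comps \<alpha> ! j \<inter> comps \<alpha> ! k else {})"

definition proj_is1 :: "'a::field pt6 set \<Rightarrow> 'a pt6 \<Rightarrow> bool" where
  "proj_is1 S p \<longleftrightarrow> p \<noteq> zero6 \<and> S = pclass p"

definition proj_is2 :: "'a::field pt6 set \<Rightarrow> 'a pt6 \<Rightarrow> 'a pt6 \<Rightarrow> bool" where
  "proj_is2 S p q \<longleftrightarrow> p \<noteq> zero6 \<and> q \<noteq> zero6 \<and> \<not> peq p q \<and> S = pclass p \<union> pclass q"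

end

theory Submission
  imports Defs
begin

lemma two_pt_intro:
  assumes "\<And>v. v \<in> S \<Longrightarrow> \<exists>c. c\<noteq>0 \<and> (v = scale6 c p \<or> v = scale6 c q)"
  and "\<And>c. c\<noteq>0 \<Longrightarrow> scale6 c p \<in> S \<and> scale6 c q \<in> S"
  and "S \<subseteq> - {zero6}" and "p\<noteq>zero6" "q\<noteq>zero6" "\<not> peq p q"
  shows "proj_is2 S p q"
  using assms unfolding proj_is2_def pclass_def peq_def by blast

lemma one_pt_intro:
  assumes "\<And>v. v \<in> S \<Longrightarrow> \<exists>c. c\<noteq>0 \<and> v = scale6 c p"
  and "\<And>c. c\<noteq>0 \<Longrightarrow> scale6 c p \<in> S"
  and "S \<subseteq> - {zero6}" and "p\<noteq>zero6"
  shows "proj_is1 S p"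
  using assms unfolding proj_is1_def pclass_def peq_def by blast

lemma L_nz: "L1 \<alpha> \<subseteq> - {zero6}" "L2 \<alpha> \<subseteq> - {zero6}" "L3 \<alpha> \<subseteq> - {zero6}" "L4 \<alpha> \<subseteq> - {zero6}"
  "L5a \<alpha> \<subseteq> - {zero6}" "L5b \<alpha> \<subseteq> - {zero6}" "L6a \<alpha> \<subseteq> - {zero6}" "L6b \<alpha> \<subseteq> - {zero6}"
  by (auto simp: L1_def L2_def L3_def L4_def L5a_def L5b_def L6a_def L6b_def)

lemma P6_zero[simp]: "P6 x1 x2 x3 x4 x5 x6 = zero6 \<longleftrightarrow> x1=0 \<and> x2=0 \<and> x3=0 \<and> x4=0 \<and> x5=0 \<and> x6=0"
  by (simp add: zero6_def)

lemma scale6_P6[simp]: "scale6 c (P6 x1 x2 x3 x4 x5 x6) = P6 (c*x1) (c*x2) (c*x3) (c*x4) (c*x5) (c*x6)"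
  by (simp add: scale6_def)

lemma peq_P6: "peq (P6 x1 x2 x3 x4 x5 x6) (P6 y1 y2 y3 y4 y5 y6) \<longleftrightarrow>
   (\<exists>c. c\<noteq>0 \<and> x1 = c*y1 \<and> x2 = c*y2 \<and> x3 = c*y3 \<and> x4 = c*y4 \<and> x5 = c*y5 \<and> x6 = c*y6)"
  by (simp add: peq_def)

lemma neg_self_iff[simp]: "(x::'k::field_char_0) = - x \<longleftrightarrow> x = 0"
proof
  assume "x = - x" hence "2 * x = 0" by (metis add.right_inverse mult_2)
  thus "x = 0" by simp
qed simp

lemma i_facts:
  fixes i :: "'k::field_char_0"
  assumes "i^2 = -1" shows "i \<noteq> 0" "i \<noteq> - i"
  using assms by (auto simp: power2_eq_square)

lemma L13:
  fixes \<alpha> i :: "'k::field_char_0"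
  assumes "i^2 = -1"
  shows "proj_is2 (L1 \<alpha> \<inter> L3 \<alpha>) (P6 1 0 i 0 0 0) (P6 1 0 (- i) 0 0 0)"
proof (rule two_pt_intro)
  fix v assume v: "v \<in> L1 \<alpha> \<inter> L3 \<alpha>"
  obtain p q r s t u where vv: "v = P6 p q r s t u" by (cases v)
  have e: "q=0" "s=0" "t=0" "u=0" "p^2+r^2=0" and nz: "\<not>(p=0 \<and> r=0)" using v vv by (auto simp: L1_def L3_def)
  have "r^2 = (i*p)^2" using e assms by (simp add: power_mult_distrib add_eq_0_iff)
  hence "r = i*p \<or> r = -(i*p)" by (simp add: power2_eq_iff)
  moreover have "p \<noteq> 0" using nz e by auto
  ultimately show "\<exists>c. c\<noteq>0 \<and> (v = scale6 c (P6 1 0 i 0 0 0) \<or> v = scale6 c (P6 1 0 (- i) 0 0 0))"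
    using vv e by (intro exI[of _ p]) (auto simp: mult.commute)
next
  fix c :: 'k assume "c \<noteq> 0"
  then show "scale6 c (P6 1 0 i 0 0 0) \<in> L1 \<alpha> \<inter> L3 \<alpha> \<and> scale6 c (P6 1 0 (- i) 0 0 0) \<in> L1 \<alpha> \<inter> L3 \<alpha>"
    using assms by (simp add: L1_def L3_def power_mult_distrib power3_eq_cube algebra_simps)
      (simp add: power2_eq_square)
qed (use L_nz[of \<alpha>] assms i_facts in \<open>auto simp: peq_P6\<close>)

lemma L14:
  fixes \<alpha> d :: "'k::field_char_0"
  assumes "\<alpha> * (1 - \<alpha> ^ 2) \<noteq> 0" "d^2 = 1 - \<alpha>^2"
  shows "proj_is2 (L1 \<alpha> \<inter> L4 \<alpha>) (P6 0 0 0 \<alpha> 0 (1 + d)) (P6 0 0 0 \<alpha> 0 (1 - d))"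
proof (rule two_pt_intro)
  have a0: "\<alpha> \<noteq> 0" using assms by auto
  fix v assume v: "v \<in> L1 \<alpha> \<inter> L4 \<alpha>"
  obtain p q r s t u where vv: "v = P6 p q r s t u" by (cases v)
  have e: "p=0" "q=0" "r=0" "t=0" "\<alpha>*s^2 - 2*s*u + \<alpha>*u^2=0" and nz: "\<not>(s=0 \<and> u=0)" using v vv by (auto simp: L1_def L4_def)
  have s0: "s \<noteq> 0" using nz e a0 by auto
  have "(\<alpha>*u - s)^2 = (s*d)^2" using e(5) assms(2) by algebra
  hence "\<alpha>*u - s = s*d \<or> \<alpha>*u - s = -(s*d)" by (simp add: power2_eq_iff)
  hence "u = s/\<alpha>*(1+d) \<or> u = s/\<alpha>*(1-d)" using a0 by (auto simp: field_simps)
  then show "\<exists>c. c\<noteq>0 \<and> (v = scale6 c (P6 0 0 0 \<alpha> 0 (1 + d)) \<or> v = scale6 c (P6 0 0 0 \<alpha> 0 (1 - d)))"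
    using vv e a0 s0 by (intro exI[of _ "s/\<alpha>"]) auto
next
  fix c :: 'k assume c: "c \<noteq> 0"
  have a0: "\<alpha> \<noteq> 0" using assms by auto
  have k1: "\<alpha>*(c*\<alpha>)^2 - 2*(c*\<alpha>)*(c*(1+d)) + \<alpha>*(c*(1+d))^2 = 0" using assms(2) by algebra
  have k2: "\<alpha>*(c*\<alpha>)^2 - 2*(c*\<alpha>)*(c*(1-d)) + \<alpha>*(c*(1-d))^2 = 0" using assms(2) by algebra
  have k3: "- \<alpha>*(c*\<alpha>)^2*(c*(1+d)) + 2*(c*\<alpha>)*(c*(1+d))^2 - \<alpha>*(c*(1+d))^3 = 0" using assms(2) by algebra
  have k4: "- \<alpha>*(c*\<alpha>)^2*(c*(1-d)) + 2*(c*\<alpha>)*(c*(1-d))^2 - \<alpha>*(c*(1-d))^3 = 0" using assms(2) by algebra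
  show "scale6 c (P6 0 0 0 \<alpha> 0 (1 + d)) \<in> L1 \<alpha> \<inter> L4 \<alpha> \<and> scale6 c (P6 0 0 0 \<alpha> 0 (1 - d)) \<in> L1 \<alpha> \<inter> L4 \<alpha>"
    using c a0 k1 k2 k3 k4 by (simp add: L1_def L4_def algebra_simps)
next
  have a0: "\<alpha> \<noteq> 0" using assms by auto
  have "d \<noteq> 0" using assms by auto
  thus "\<not> peq (P6 0 0 0 \<alpha> 0 (1 + d)) (P6 0 0 0 \<alpha> 0 (1 - d))" using a0 by (auto simp: peq_P6)
qed (use L_nz[of \<alpha>] assms in auto)

lemma L15b:
  fixes \<alpha> i a :: "'k::field_char_0"
  assumes "\<alpha> \<noteq> 0" "i^2 = -1" "a^2 = \<alpha>"
  shows "proj_is2 (L1 \<alpha> \<inter> L5b \<alpha>) (P6 0 0 (i * a) 0 0 1) (P6 0 0 (- (i * a)) 0 0 1)"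
proof (rule two_pt_intro)
  fix v assume v: "v \<in> L1 \<alpha> \<inter> L5b \<alpha>"
  obtain p q r s t u where vv: "v = P6 p q r s t u" by (cases v)
  have e: "p=0" "q=0" "s=0" "t=0" "r^2 + \<alpha>*u^2=0" and nz: "\<not>(r=0 \<and> u=0)" using v vv by (auto simp: L1_def L5b_def)
  have u0: "u \<noteq> 0" using nz e assms by auto
  have "r^2 = (i*a*u)^2" using e(5) assms by algebra
  hence "r = i*a*u \<or> r = -(i*a*u)" by (simp add: power2_eq_iff)
  then show "\<exists>c. c\<noteq>0 \<and> (v = scale6 c (P6 0 0 (i * a) 0 0 1) \<or> v = scale6 c (P6 0 0 (- (i * a)) 0 0 1))"
    using vv e u0 by (intro exI[of _ "u"]) (auto simp: algebra_simps)
next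
  fix c :: 'k assume c: "c \<noteq> 0"
  have k1: "(c*(i*a))^2 + \<alpha>*c^2 = 0" using assms by algebra
  show "scale6 c (P6 0 0 (i * a) 0 0 1) \<in> L1 \<alpha> \<inter> L5b \<alpha> \<and> scale6 c (P6 0 0 (- (i * a)) 0 0 1) \<in> L1 \<alpha> \<inter> L5b \<alpha>"
    using c k1 by (simp add: L1_def L5b_def algebra_simps)
next
  have "i*a \<noteq> 0" using assms i_facts by auto
  thus "\<not> peq (P6 0 0 (i * a) 0 0 1) (P6 0 0 (- (i * a)) 0 0 1)" by (auto simp: peq_P6)
qed (use L_nz[of \<alpha>] assms i_facts in auto)

lemma L16b:
  fixes \<alpha> i a :: "'k::field_char_0"
  assumes "\<alpha> \<noteq> 0" "i^2 = -1" "a^2 = \<alpha>"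
  shows "proj_is2 (L1 \<alpha> \<inter> L6b \<alpha>) (P6 (i * a) 0 0 1 0 0) (P6 (- (i * a)) 0 0 1 0 0)"
proof (rule two_pt_intro)
  fix v assume v: "v \<in> L1 \<alpha> \<inter> L6b \<alpha>"
  obtain p q r s t u where vv: "v = P6 p q r s t u" by (cases v)
  have e: "r=0" "q=0" "u=0" "t=0" "p^2 + \<alpha>*s^2=0" and nz: "\<not>(p=0 \<and> s=0)" using v vv by (auto simp: L1_def L6b_def)
  have u0: "s \<noteq> 0" using nz e assms by auto
  have "p^2 = (i*a*s)^2" using e(5) assms by algebra
  hence "p = i*a*s \<or> p = -(i*a*s)" by (simp add: power2_eq_iff)
  then show "\<exists>c. c\<noteq>0 \<and> (v = scale6 c (P6 (i * a) 0 0 1 0 0) \<or> v = scale6 c (P6 (- (i * a)) 0 0 1 0 0))"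
    using vv e u0 by (intro exI[of _ "s"]) (auto simp: algebra_simps)
next
  fix c :: 'k assume c: "c \<noteq> 0"
  have k1: "(c*(i*a))^2 + \<alpha>*c^2 = 0" using assms by algebra
  show "scale6 c (P6 (i * a) 0 0 1 0 0) \<in> L1 \<alpha> \<inter> L6b \<alpha> \<and> scale6 c (P6 (- (i * a)) 0 0 1 0 0) \<in> L1 \<alpha> \<inter> L6b \<alpha>"
    using c k1 by (simp add: L1_def L6b_def algebra_simps)
next
  have "i*a \<noteq> 0" using assms i_facts by auto
  thus "\<not> peq (P6 (i * a) 0 0 1 0 0) (P6 (- (i * a)) 0 0 1 0 0)" by (auto simp: peq_P6)
qed (use L_nz[of \<alpha>] assms i_facts in auto)

lemma L25b:
  fixes \<alpha> i a b :: "'k::field_char_0"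
  assumes "\<alpha> \<noteq> 0" "i^2 = -1" "a^2 = \<alpha>" "b^2 = 2"
  shows "proj_is2 (L2 \<alpha> \<inter> L5b \<alpha>) (P6 0 0 0 0 a (i * b)) (P6 0 0 0 0 a (- (i * b)))"
proof (rule two_pt_intro)
  have a0: "a \<noteq> 0" using assms by auto
  fix v assume v: "v \<in> L2 \<alpha> \<inter> L5b \<alpha>"
  obtain p q r s t u where vv: "v = P6 p q r s t u" by (cases v)
  have e: "p=0" "q=0" "r=0" "s=0" "2*t^2 + \<alpha>*u^2=0" and nz: "\<not>(t=0 \<and> u=0)" using v vv by (auto simp: L2_def L5b_def)
  have t0: "t \<noteq> 0" using nz e assms by auto
  have "(a*u)^2 = (i*b*t)^2" using e(5) assms by algebra
  hence "a*u = i*b*t \<or> a*u = -(i*b*t)" by (simp add: power2_eq_iff)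
  hence "u = t/a*(i*b) \<or> u = t/a*(-(i*b))" using a0 by (auto simp: field_simps)
  then show "\<exists>c. c\<noteq>0 \<and> (v = scale6 c (P6 0 0 0 0 a (i * b)) \<or> v = scale6 c (P6 0 0 0 0 a (- (i * b))))"
    using vv e t0 a0 by (intro exI[of _ "t/a"]) auto
next
  fix c :: 'k assume c: "c \<noteq> 0"
  have "a \<noteq> 0" using assms by auto
  have k1: "2*(c*a)^2 + \<alpha>*(c*(i*b))^2 = 0" using assms by algebra
  have k2: "(c*a)^2 + \<alpha>*(c*(i*b))^2/2 = 0" using k1 by (simp add: field_simps)
  show "scale6 c (P6 0 0 0 0 a (i * b)) \<in> L2 \<alpha> \<inter> L5b \<alpha> \<and> scale6 c (P6 0 0 0 0 a (- (i * b))) \<in> L2 \<alpha> \<inter> L5b \<alpha>"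
    using c k1 assms i_facts[OF \<open>i^2 = -1\<close>] \<open>a \<noteq> 0\<close> by (simp add: L2_def L5b_def algebra_simps)
next
  have "i*b \<noteq> 0" "a \<noteq> 0" using assms i_facts by auto
  thus "\<not> peq (P6 0 0 0 0 a (i * b)) (P6 0 0 0 0 a (- (i * b)))" by (auto simp: peq_P6)
qed (use L_nz[of \<alpha>] assms in auto)

lemma L26b:
  fixes \<alpha> i b :: "'k::field_char_0"
  assumes "i^2 = -1" "b^2 = 2"
  shows "proj_is2 (L2 \<alpha> \<inter> L6b \<alpha>) (P6 b 0 0 0 i 0) (P6 b 0 0 0 (- i) 0)"
proof (rule two_pt_intro)
  have b0: "b \<noteq> 0" using assms by auto
  fix v assume v: "v \<in> L2 \<alpha> \<inter> L6b \<alpha>"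
  obtain p q r s t u where vv: "v = P6 p q r s t u" by (cases v)
  have e: "u=0" "q=0" "r=0" "s=0" "p^2 + 2*t^2=0" and nz: "\<not>(t=0 \<and> p=0)" using v vv by (auto simp: L2_def L6b_def)
  have t0: "p \<noteq> 0" using nz e by auto
  have "(b*t)^2 = (i*p)^2" using e(5) assms by algebra
  hence "b*t = i*p \<or> b*t = -(i*p)" by (simp add: power2_eq_iff)
  hence "t = p/b*i \<or> t = p/b*(-i)" using b0 by (auto simp: field_simps)
  then show "\<exists>c. c\<noteq>0 \<and> (v = scale6 c (P6 b 0 0 0 i 0) \<or> v = scale6 c (P6 b 0 0 0 (- i) 0))"
    using vv e t0 b0 by (intro exI[of _ "p/b"]) auto
next
  fix c :: 'k assume c: "c \<noteq> 0"
  have k1: "(c*b)^2 + 2*(c*i)^2 = 0" using assms by algebra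
  show "scale6 c (P6 b 0 0 0 i 0) \<in> L2 \<alpha> \<inter> L6b \<alpha> \<and> scale6 c (P6 b 0 0 0 (- i) 0) \<in> L2 \<alpha> \<inter> L6b \<alpha>"
    using c k1 assms i_facts[OF \<open>i^2 = -1\<close>] by (simp add: L2_def L6b_def algebra_simps)
next
  show "\<not> peq (P6 b 0 0 0 i 0) (P6 b 0 0 0 (- i) 0)" using assms i_facts by (auto simp: peq_P6)
qed (use L_nz[of \<alpha>] assms i_facts in auto)

lemma L5a5b:
  fixes \<alpha> i b :: "'k::field_char_0"
  assumes "i^2 = -1" "b^2 = 2"
  shows "proj_is2 (L5a \<alpha> \<inter> L5b \<alpha>) (P6 0 0 b 0 i 0) (P6 0 0 b 0 (- i) 0)"
proof (rule two_pt_intro)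
  have b0: "b \<noteq> 0" using assms by auto
  fix v assume v: "v \<in> L5a \<alpha> \<inter> L5b \<alpha>"
  obtain p q r s t u where vv: "v = P6 p q r s t u" by (cases v)
  have e: "u=0" "q=0" "p=0" "s=0" "r^2 + 2*t^2=0" and nz: "\<not>(t=0 \<and> r=0)" using v vv by (auto simp: L5a_def L5b_def)
  have t0: "r \<noteq> 0" using nz e by auto
  have "(b*t)^2 = (i*r)^2" using e(5) assms by algebra
  hence "b*t = i*r \<or> b*t = -(i*r)" by (simp add: power2_eq_iff)
  hence "t = r/b*i \<or> t = r/b*(-i)" using b0 by (auto simp: field_simps)
  then show "\<exists>c. c\<noteq>0 \<and> (v = scale6 c (P6 0 0 b 0 i 0) \<or> v = scale6 c (P6 0 0 b 0 (- i) 0))"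
    using vv e t0 b0 by (intro exI[of _ "r/b"]) auto
next
  fix c :: 'k assume c: "c \<noteq> 0"
  have k1: "(c*b)^2 + 2*(c*i)^2 = 0" using assms by algebra
  show "scale6 c (P6 0 0 b 0 i 0) \<in> L5a \<alpha> \<inter> L5b \<alpha> \<and> scale6 c (P6 0 0 b 0 (- i) 0) \<in> L5a \<alpha> \<inter> L5b \<alpha>"
    using c k1 assms i_facts[OF \<open>i^2 = -1\<close>] by (simp add: L5a_def L5b_def algebra_simps)
next
  show "\<not> peq (P6 0 0 b 0 i 0) (P6 0 0 b 0 (- i) 0)" using assms i_facts by (auto simp: peq_P6)
qed (use L_nz[of \<alpha>] assms i_facts in auto)

lemma L6a6b:
  fixes \<alpha> i a b :: "'k::field_char_0"
  assumes "\<alpha> \<noteq> 0" "i^2 = -1" "a^2 = \<alpha>" "b^2 = 2"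
  shows "proj_is2 (L6a \<alpha> \<inter> L6b \<alpha>) (P6 0 0 0 b (i * a) 0) (P6 0 0 0 b (- (i * a)) 0)"
proof (rule two_pt_intro)
  have b0: "b \<noteq> 0" using assms by auto
  fix v assume v: "v \<in> L6a \<alpha> \<inter> L6b \<alpha>"
  obtain p q r s t u where vv: "v = P6 p q r s t u" by (cases v)
  have e: "u=0" "q=0" "p=0" "r=0" "\<alpha>*s^2 + 2*t^2=0" and nz: "\<not>(t=0 \<and> s=0)" using v vv by (auto simp: L6a_def L6b_def)
  have t0: "s \<noteq> 0" using nz e assms by auto
  have "(b*t)^2 = (i*a*s)^2" using e(5) assms by algebra
  hence "b*t = i*a*s \<or> b*t = -(i*a*s)" by (simp add: power2_eq_iff)
  hence "t = s/b*(i*a) \<or> t = s/b*(-(i*a))" using b0 by (auto simp: field_simps)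
  then show "\<exists>c. c\<noteq>0 \<and> (v = scale6 c (P6 0 0 0 b (i * a) 0) \<or> v = scale6 c (P6 0 0 0 b (- (i * a)) 0))"
    using vv e t0 b0 by (intro exI[of _ "s/b"]) auto
next
  fix c :: 'k assume c: "c \<noteq> 0"
  have "a \<noteq> 0" using assms by auto
  have k1: "\<alpha>*(c*b)^2 + 2*(c*(i*a))^2 = 0" using assms by algebra
  show "scale6 c (P6 0 0 0 b (i * a) 0) \<in> L6a \<alpha> \<inter> L6b \<alpha> \<and> scale6 c (P6 0 0 0 b (- (i * a)) 0) \<in> L6a \<alpha> \<inter> L6b \<alpha>"
    using c k1 assms i_facts[OF \<open>i^2 = -1\<close>] \<open>a \<noteq> 0\<close> by (simp add: L6a_def L6b_def algebra_simps)
next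
  have "i*a \<noteq> 0" using assms i_facts by auto
  moreover have "b \<noteq> 0" using assms by auto
  ultimately show "\<not> peq (P6 0 0 0 b (i * a) 0) (P6 0 0 0 b (- (i * a)) 0)" by (auto simp: peq_P6)
qed (use L_nz[of \<alpha>] assms i_facts in auto)

lemma S_L2L3:
  fixes \<alpha> :: "'k::field_char_0"
  assumes "\<alpha> \<noteq> 0"
  shows "proj_is1 (L2 \<alpha> \<inter> L3 \<alpha>) (E 2)"
proof (rule one_pt_intro)
  fix v assume v: "v \<in> L2 \<alpha> \<inter> L3 \<alpha>"
  show "\<exists>c. c\<noteq>0 \<and> v = scale6 c (E 2)" using v assms by (cases v) (auto simp: L2_def L3_def E_def)
next
  fix c :: 'k assume "c \<noteq> 0"
  then show "scale6 c (E 2) \<in> L2 \<alpha> \<inter> L3 \<alpha>" by (simp add: L2_def L3_def E_def)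
qed (use L_nz[of \<alpha>] in \<open>auto simp: E_def\<close>)

lemma S_L2L4:
  fixes \<alpha> :: "'k::field_char_0"
  assumes "\<alpha> \<noteq> 0"
  shows "proj_is1 (L2 \<alpha> \<inter> L4 \<alpha>) (E 2)"
proof (rule one_pt_intro)
  fix v assume v: "v \<in> L2 \<alpha> \<inter> L4 \<alpha>"
  show "\<exists>c. c\<noteq>0 \<and> v = scale6 c (E 2)" using v assms by (cases v) (auto simp: L2_def L4_def E_def)
next
  fix c :: 'k assume "c \<noteq> 0"
  then show "scale6 c (E 2) \<in> L2 \<alpha> \<inter> L4 \<alpha>" by (simp add: L2_def L4_def E_def)
qed (use L_nz[of \<alpha>] in \<open>auto simp: E_def\<close>)

lemma S_L3L4:
  fixes \<alpha> :: "'k::field_char_0"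
  assumes "\<alpha> \<noteq> 0"
  shows "proj_is1 (L3 \<alpha> \<inter> L4 \<alpha>) (E 2)"
proof (rule one_pt_intro)
  fix v assume v: "v \<in> L3 \<alpha> \<inter> L4 \<alpha>"
  show "\<exists>c. c\<noteq>0 \<and> v = scale6 c (E 2)" using v assms by (cases v) (auto simp: L3_def L4_def E_def)
next
  fix c :: 'k assume "c \<noteq> 0"
  then show "scale6 c (E 2) \<in> L3 \<alpha> \<inter> L4 \<alpha>" by (simp add: L3_def L4_def E_def)
qed (use L_nz[of \<alpha>] in \<open>auto simp: E_def\<close>)

lemma S_L3L5a:
  fixes \<alpha> :: "'k::field_char_0"
  assumes "\<alpha> \<noteq> 0"
  shows "proj_is1 (L3 \<alpha> \<inter> L5a \<alpha>) (E 3)"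
proof (rule one_pt_intro)
  fix v assume v: "v \<in> L3 \<alpha> \<inter> L5a \<alpha>"
  show "\<exists>c. c\<noteq>0 \<and> v = scale6 c (E 3)" using v assms by (cases v) (auto simp: L3_def L5a_def E_def)
next
  fix c :: 'k assume "c \<noteq> 0"
  then show "scale6 c (E 3) \<in> L3 \<alpha> \<inter> L5a \<alpha>" by (simp add: L3_def L5a_def E_def)
qed (use L_nz[of \<alpha>] in \<open>auto simp: E_def\<close>)

lemma S_L4L6a:
  fixes \<alpha> :: "'k::field_char_0"
  assumes "\<alpha> \<noteq> 0"
  shows "proj_is1 (L4 \<alpha> \<inter> L6a \<alpha>) (E 4)"
proof (rule one_pt_intro)
  fix v assume v: "v \<in> L4 \<alpha> \<inter> L6a \<alpha>"
  show "\<exists>c. c\<noteq>0 \<and> v = scale6 c (E 4)" using v assms by (cases v) (auto simp: L4_def L6a_def E_def)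
next
  fix c :: 'k assume "c \<noteq> 0"
  then show "scale6 c (E 4) \<in> L4 \<alpha> \<inter> L6a \<alpha>" by (simp add: L4_def L6a_def E_def)
qed (use L_nz[of \<alpha>] in \<open>auto simp: E_def\<close>)

lemma S_L5aL6a:
  fixes \<alpha> :: "'k::field_char_0"
  assumes "\<alpha> \<noteq> 0"
  shows "proj_is1 (L5a \<alpha> \<inter> L6a \<alpha>) (E 5)"
proof (rule one_pt_intro)
  fix v assume v: "v \<in> L5a \<alpha> \<inter> L6a \<alpha>"
  show "\<exists>c. c\<noteq>0 \<and> v = scale6 c (E 5)" using v assms by (cases v) (auto simp: L5a_def L6a_def E_def)
next
  fix c :: 'k assume "c \<noteq> 0"
  then show "scale6 c (E 5) \<in> L5a \<alpha> \<inter> L6a \<alpha>" by (simp add: L5a_def L6a_def E_def)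
qed (use L_nz[of \<alpha>] in \<open>auto simp: E_def\<close>)

lemma Z_L1L2:
  fixes \<alpha> :: "'k::field_char_0"
  assumes "\<alpha> \<noteq> 0"
  shows "L1 \<alpha> \<inter> L2 \<alpha> = {}"
proof -
  { fix v assume v: "v \<in> L1 \<alpha> \<inter> L2 \<alpha>"
    have False using v assms by (cases v) (auto simp: L1_def L2_def) }
  thus ?thesis by blast
qed

lemma Z_L1L5a:
  fixes \<alpha> :: "'k::field_char_0"
  assumes "\<alpha> \<noteq> 0"
  shows "L1 \<alpha> \<inter> L5a \<alpha> = {}"
proof -
  { fix v assume v: "v \<in> L1 \<alpha> \<inter> L5a \<alpha>"
    have False using v assms by (cases v) (auto simp: L1_def L5a_def) }
  thus ?thesis by blast
qed

lemma Z_L1L6a: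
  fixes \<alpha> :: "'k::field_char_0"
  assumes "\<alpha> \<noteq> 0"
  shows "L1 \<alpha> \<inter> L6a \<alpha> = {}"
proof -
  { fix v assume v: "v \<in> L1 \<alpha> \<inter> L6a \<alpha>"
    have False using v assms by (cases v) (auto simp: L1_def L6a_def) }
  thus ?thesis by blast
qed

lemma Z_L2L5a:
  fixes \<alpha> :: "'k::field_char_0"
  assumes "\<alpha> \<noteq> 0"
  shows "L2 \<alpha> \<inter> L5a \<alpha> = {}"
proof -
  { fix v assume v: "v \<in> L2 \<alpha> \<inter> L5a \<alpha>"
    have False using v assms by (cases v) (auto simp: L2_def L5a_def) }
  thus ?thesis by blast
qed

lemma Z_L2L6a:
  fixes \<alpha> :: "'k::field_char_0"
  assumes "\<alpha> \<noteq> 0"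
  shows "L2 \<alpha> \<inter> L6a \<alpha> = {}"
proof -
  { fix v assume v: "v \<in> L2 \<alpha> \<inter> L6a \<alpha>"
    have False using v assms by (cases v) (auto simp: L2_def L6a_def) }
  thus ?thesis by blast
qed

lemma Z_L3L5b:
  fixes \<alpha> :: "'k::field_char_0"
  assumes "\<alpha> \<noteq> 0"
  shows "L3 \<alpha> \<inter> L5b \<alpha> = {}"
proof -
  { fix v assume v: "v \<in> L3 \<alpha> \<inter> L5b \<alpha>"
    have False using v assms by (cases v) (auto simp: L3_def L5b_def) }
  thus ?thesis by blast
qed

lemma Z_L3L6a:
  fixes \<alpha> :: "'k::field_char_0"
  assumes "\<alpha> \<noteq> 0"
  shows "L3 \<alpha> \<inter> L6a \<alpha> = {}"
proof -
  { fix v assume v: "v \<in> L3 \<alpha> \<inter> L6a \<alpha>"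
    have False using v assms by (cases v) (auto simp: L3_def L6a_def) }
  thus ?thesis by blast
qed

lemma Z_L3L6b:
  fixes \<alpha> :: "'k::field_char_0"
  assumes "\<alpha> \<noteq> 0"
  shows "L3 \<alpha> \<inter> L6b \<alpha> = {}"
proof -
  { fix v assume v: "v \<in> L3 \<alpha> \<inter> L6b \<alpha>"
    have False using v assms by (cases v) (auto simp: L3_def L6b_def) }
  thus ?thesis by blast
qed

lemma Z_L4L5a:
  fixes \<alpha> :: "'k::field_char_0"
  assumes "\<alpha> \<noteq> 0"
  shows "L4 \<alpha> \<inter> L5a \<alpha> = {}"
proof -
  { fix v assume v: "v \<in> L4 \<alpha> \<inter> L5a \<alpha>"
    have False using v assms by (cases v) (auto simp: L4_def L5a_def) }
  thus ?thesis by blast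
qed

lemma Z_L4L5b:
  fixes \<alpha> :: "'k::field_char_0"
  assumes "\<alpha> \<noteq> 0"
  shows "L4 \<alpha> \<inter> L5b \<alpha> = {}"
proof -
  { fix v assume v: "v \<in> L4 \<alpha> \<inter> L5b \<alpha>"
    have False using v assms by (cases v) (auto simp: L4_def L5b_def) }
  thus ?thesis by blast
qed

lemma Z_L4L6b:
  fixes \<alpha> :: "'k::field_char_0"
  assumes "\<alpha> \<noteq> 0"
  shows "L4 \<alpha> \<inter> L6b \<alpha> = {}"
proof -
  { fix v assume v: "v \<in> L4 \<alpha> \<inter> L6b \<alpha>"
    have False using v assms by (cases v) (auto simp: L4_def L6b_def) }
  thus ?thesis by blast
qed

lemma Z_L5aL6b:
  fixes \<alpha> :: "'k::field_char_0"
  assumes "\<alpha> \<noteq> 0"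
  shows "L5a \<alpha> \<inter> L6b \<alpha> = {}"
proof -
  { fix v assume v: "v \<in> L5a \<alpha> \<inter> L6b \<alpha>"
    have False using v assms by (cases v) (auto simp: L5a_def L6b_def) }
  thus ?thesis by blast
qed

lemma Z_L5bL6a:
  fixes \<alpha> :: "'k::field_char_0"
  assumes "\<alpha> \<noteq> 0"
  shows "L5b \<alpha> \<inter> L6a \<alpha> = {}"
proof -
  { fix v assume v: "v \<in> L5b \<alpha> \<inter> L6a \<alpha>"
    have False using v assms by (cases v) (auto simp: L5b_def L6a_def) }
  thus ?thesis by blast
qed

lemma Z_L5bL6b:
  fixes \<alpha> :: "'k::field_char_0"
  assumes "\<alpha> \<noteq> 0"
  shows "L5b \<alpha> \<inter> L6b \<alpha> = {}"
proof -
  { fix v assume v: "v \<in> L5b \<alpha> \<inter> L6b \<alpha>"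
    have False using v assms by (cases v) (auto simp: L5b_def L6b_def) }
  thus ?thesis by blast
qed

lemma IP: "intersection_pts \<alpha> = 
  (L1 \<alpha> \<inter> L2 \<alpha>) \<union> (L1 \<alpha> \<inter> L3 \<alpha>) \<union> (L1 \<alpha> \<inter> L4 \<alpha>) \<union> (L1 \<alpha> \<inter> L5a \<alpha>) \<union> (L1 \<alpha> \<inter> L5b \<alpha>) \<union> (L1 \<alpha> \<inter> L6a \<alpha>) \<union> (L1 \<alpha> \<inter> L6b \<alpha>)
  \<union> (L2 \<alpha> \<inter> L3 \<alpha>) \<union> (L2 \<alpha> \<inter> L4 \<alpha>) \<union> (L2 \<alpha> \<inter> L5a \<alpha>) \<union> (L2 \<alpha> \<inter> L5b \<alpha>) \<union> (L2 \<alpha> \<inter> L6a \<alpha>) \<union> (L2 \<alpha> \<inter> L6b \<alpha>)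
  \<union> (L3 \<alpha> \<inter> L4 \<alpha>) \<union> (L3 \<alpha> \<inter> L5a \<alpha>) \<union> (L3 \<alpha> \<inter> L5b \<alpha>) \<union> (L3 \<alpha> \<inter> L6a \<alpha>) \<union> (L3 \<alpha> \<inter> L6b \<alpha>)
  \<union> (L4 \<alpha> \<inter> L5a \<alpha>) \<union> (L4 \<alpha> \<inter> L5b \<alpha>) \<union> (L4 \<alpha> \<inter> L6a \<alpha>) \<union> (L4 \<alpha> \<inter> L6b \<alpha>)
  \<union> (L5a \<alpha> \<inter> L5b \<alpha>) \<union> (L5a \<alpha> \<inter> L6a \<alpha>) \<union> (L5a \<alpha> \<inter> L6b \<alpha>)
  \<union> (L5b \<alpha> \<inter> L6a \<alpha>) \<union> (L5b \<alpha> \<inter> L6b \<alpha>) \<union> (L6a \<alpha> \<inter> L6b \<alpha>)"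
proof -
  have lt8: "{..<8::nat} = {0,1,2,3,4,5,6,7}" by auto
  show ?thesis unfolding intersection_pts_def comps_def lt8
    by (simp add: Int_Un_distrib Un_ac)
qed

lemma pclass_image: "p \<noteq> zero6 \<Longrightarrow> pclass ` pclass p = {pclass p}"
proof -
  assume p: "p \<noteq> zero6"
  have "p \<in> pclass p" using p unfolding pclass_def peq_def
    by (auto intro!: exI[of _ 1] simp: scale6_def)
  moreover have "pclass w = pclass p" if "w \<in> pclass p" for w
  proof -
    from that obtain c where c: "c \<noteq> 0" "w = scale6 c p" "w \<noteq> zero6" unfolding pclass_def peq_def by auto
    show ?thesis unfolding pclass_def peq_def
    proof (intro Collect_cong conj_cong refl iffI; elim exE conjE)
      fix x e assume "e \<noteq> 0" "x = scale6 e w"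
      thus "\<exists>e. e \<noteq> 0 \<and> x = scale6 e p" using c by (intro exI[of _ "e*c"]) (cases p; simp add: scale6_def)
    next
      fix x e assume "e \<noteq> 0" "x = scale6 e p"
      thus "\<exists>e. e \<noteq> 0 \<and> x = scale6 e w" using c by (intro exI[of _ "e/c"]) (cases p; simp add: scale6_def)
    qed
  qed
  ultimately show ?thesis by blast
qed

lemma pclass_eq_iff: "p \<noteq> zero6 \<Longrightarrow> pclass p = pclass q \<longleftrightarrow> peq p q"
proof
  assume p: "p \<noteq> zero6" and e: "pclass p = pclass q"
  have "p \<in> pclass p" using p unfolding pclass_def peq_def
    by (auto intro!: exI[of _ 1] simp: scale6_def)
  thus "peq p q" using e unfolding pclass_def by blast
next
  assume p: "p \<noteq> zero6" and e: "peq p q"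
  then obtain c where c: "c\<noteq>0" "p = scale6 c q" by (auto simp: peq_def)
  show "pclass p = pclass q" unfolding pclass_def peq_def
    proof (intro Collect_cong conj_cong refl iffI; elim exE conjE)
      fix x e assume "e \<noteq> 0" "x = scale6 e p"
      thus "\<exists>e. e \<noteq> 0 \<and> x = scale6 e q" using c by (intro exI[of _ "e*c"]) (cases q; simp add: scale6_def)
    next
      fix x e assume "e \<noteq> 0" "x = scale6 e q"
      thus "\<exists>e. e \<noteq> 0 \<and> x = scale6 e p" using c by (intro exI[of _ "e/c"]) (cases q; simp add: scale6_def)
    qed
qed

lemma E_vals: "E 2 = P6 0 1 0 0 0 0" "E 3 = P6 0 0 1 0 0 0" "E 4 = P6 0 0 0 1 0 0" "E 5 = P6 0 0 0 0 1 0"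
  by (simp_all add: E_def)

theorem corollary3p3:
  fixes \<alpha> i a b d :: "'k::field_char_0"
  assumes "alg_closed TYPE('k)"
    and "\<alpha> * (1 - \<alpha> ^ 2) \<noteq> 0"
    and "i ^ 2 = -1" and "a ^ 2 = \<alpha>" and "b ^ 2 = 2" and "d ^ 2 = 1 - \<alpha> ^ 2"
  shows
    "card (pclass ` intersection_pts \<alpha>) = 20
     \<and> proj_is1 (L2 \<alpha> \<inter> L3 \<alpha>) (E 2)
     \<and> proj_is1 (L2 \<alpha> \<inter> L4 \<alpha>) (E 2)
     \<and> proj_is1 (L3 \<alpha> \<inter> L4 \<alpha>) (E 2)
     \<and> proj_is1 (L3 \<alpha> \<inter> L5a \<alpha>) (E 3)
     \<and> proj_is1 (L4 \<alpha> \<inter> L6a \<alpha>) (E 4)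
     \<and> proj_is1 (L5a \<alpha> \<inter> L6a \<alpha>) (E 5)
     \<and> proj_is2 (L1 \<alpha> \<inter> L3 \<alpha>) (P6 1 0 i 0 0 0) (P6 1 0 (- i) 0 0 0)
     \<and> proj_is2 (L1 \<alpha> \<inter> L4 \<alpha>) (P6 0 0 0 \<alpha> 0 (1 + d)) (P6 0 0 0 \<alpha> 0 (1 - d))
     \<and> proj_is2 (L1 \<alpha> \<inter> L5b \<alpha>) (P6 0 0 (i * a) 0 0 1) (P6 0 0 (- (i * a)) 0 0 1)
     \<and> proj_is2 (L1 \<alpha> \<inter> L6b \<alpha>) (P6 (i * a) 0 0 1 0 0) (P6 (- (i * a)) 0 0 1 0 0)
     \<and> proj_is2 (L2 \<alpha> \<inter> L5b \<alpha>) (P6 0 0 0 0 a (i * b)) (P6 0 0 0 0 a (- (i * b)))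
     \<and> proj_is2 (L2 \<alpha> \<inter> L6b \<alpha>) (P6 b 0 0 0 i 0) (P6 b 0 0 0 (- i) 0)
     \<and> proj_is2 (L5a \<alpha> \<inter> L5b \<alpha>) (P6 0 0 b 0 i 0) (P6 0 0 b 0 (- i) 0)
     \<and> proj_is2 (L6a \<alpha> \<inter> L6b \<alpha>) (P6 0 0 0 b (i * a) 0) (P6 0 0 0 b (- (i * a)) 0)
     \<and> L1 \<alpha> \<inter> L2 \<alpha> = {} \<and> L1 \<alpha> \<inter> L5a \<alpha> = {} \<and> L1 \<alpha> \<inter> L6a \<alpha> = {}
     \<and> L2 \<alpha> \<inter> L5a \<alpha> = {} \<and> L2 \<alpha> \<inter> L6a \<alpha> = {}
     \<and> L3 \<alpha> \<inter> L5b \<alpha> = {} \<and> L3 \<alpha> \<inter> L6a \<alpha> = {} \<and> L3 \<alpha> \<inter> L6b \<alpha> = {}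
     \<and> L4 \<alpha> \<inter> L5a \<alpha> = {} \<and> L4 \<alpha> \<inter> L5b \<alpha> = {} \<and> L4 \<alpha> \<inter> L6b \<alpha> = {}
     \<and> L5a \<alpha> \<inter> L6b \<alpha> = {} \<and> L5b \<alpha> \<inter> L6a \<alpha> = {} \<and> L5b \<alpha> \<inter> L6b \<alpha> = {}"
proof -
  have a0: "\<alpha> \<noteq> 0" using assms(2) by auto
  have d0: "d \<noteq> 0" "1 + d \<noteq> 0" "1 - d \<noteq> 0" using assms(2,6) by (auto simp: power2_eq_square) algebra+
  have i0: "i \<noteq> 0" "i \<noteq> -i" using i_facts assms(3) by auto
  have aa0: "a \<noteq> 0" using assms(4) a0 by auto
  have b0: "b \<noteq> 0" using assms(5) by auto
  note P1 = S_L2L3[OF a0] S_L2L4[OF a0] S_L3L4[OF a0] S_L3L5a[OF a0] S_L4L6a[OF a0] S_L5aL6a[OF a0]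
  note P2 = L13[OF assms(3)] L14[OF assms(2,6)] L15b[OF a0 assms(3,4)] L16b[OF a0 assms(3,4)]
    L25b[OF a0 assms(3,4,5)] L26b[OF assms(3,5)] L5a5b[OF assms(3,5)] L6a6b[OF a0 assms(3,4,5)]
  note Z = Z_L1L2[OF a0] Z_L1L5a[OF a0] Z_L1L6a[OF a0] Z_L2L5a[OF a0] Z_L2L6a[OF a0] Z_L3L5b[OF a0]
    Z_L3L6a[OF a0] Z_L3L6b[OF a0] Z_L4L5a[OF a0] Z_L4L5b[OF a0] Z_L4L6b[OF a0] Z_L5aL6b[OF a0]
    Z_L5bL6a[OF a0] Z_L5bL6b[OF a0]
  have eqs: "L2 \<alpha> \<inter> L3 \<alpha> = pclass (E 2)" "L2 \<alpha> \<inter> L4 \<alpha> = pclass (E 2)" "L3 \<alpha> \<inter> L4 \<alpha> = pclass (E 2)"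
    "L3 \<alpha> \<inter> L5a \<alpha> = pclass (E 3)" "L4 \<alpha> \<inter> L6a \<alpha> = pclass (E 4)" "L5a \<alpha> \<inter> L6a \<alpha> = pclass (E 5)"
    using P1 unfolding proj_is1_def by auto
  have eqs2: "L1 \<alpha> \<inter> L3 \<alpha> = pclass (P6 1 0 i 0 0 0) \<union> pclass (P6 1 0 (- i) 0 0 0)"
     "L1 \<alpha> \<inter> L4 \<alpha> = pclass (P6 0 0 0 \<alpha> 0 (1 + d)) \<union> pclass (P6 0 0 0 \<alpha> 0 (1 - d))"
     "L1 \<alpha> \<inter> L5b \<alpha> = pclass (P6 0 0 (i * a) 0 0 1) \<union> pclass (P6 0 0 (- (i * a)) 0 0 1)"
     "L1 \<alpha> \<inter> L6b \<alpha> = pclass (P6 (i * a) 0 0 1 0 0) \<union> pclass (P6 (- (i * a)) 0 0 1 0 0)"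
     "L2 \<alpha> \<inter> L5b \<alpha> = pclass (P6 0 0 0 0 a (i * b)) \<union> pclass (P6 0 0 0 0 a (- (i * b)))"
     "L2 \<alpha> \<inter> L6b \<alpha> = pclass (P6 b 0 0 0 i 0) \<union> pclass (P6 b 0 0 0 (- i) 0)"
     "L5a \<alpha> \<inter> L5b \<alpha> = pclass (P6 0 0 b 0 i 0) \<union> pclass (P6 0 0 b 0 (- i) 0)"
     "L6a \<alpha> \<inter> L6b \<alpha> = pclass (P6 0 0 0 b (i * a) 0) \<union> pclass (P6 0 0 0 b (- (i * a)) 0)"
    using P2 unfolding proj_is2_def by auto
  have img: "pclass ` intersection_pts \<alpha> = {pclass (P6 0 1 0 0 0 0), pclass (P6 0 0 1 0 0 0), pclass (P6 0 0 0 1 0 0), pclass (P6 0 0 0 0 1 0),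
     pclass (P6 1 0 i 0 0 0), pclass (P6 1 0 (- i) 0 0 0),
     pclass (P6 0 0 0 \<alpha> 0 (1 + d)), pclass (P6 0 0 0 \<alpha> 0 (1 - d)),
     pclass (P6 0 0 (i * a) 0 0 1), pclass (P6 0 0 (- (i * a)) 0 0 1),
     pclass (P6 (i * a) 0 0 1 0 0), pclass (P6 (- (i * a)) 0 0 1 0 0),
     pclass (P6 0 0 0 0 a (i * b)), pclass (P6 0 0 0 0 a (- (i * b))),
     pclass (P6 b 0 0 0 i 0), pclass (P6 b 0 0 0 (- i) 0),
     pclass (P6 0 0 b 0 i 0), pclass (P6 0 0 b 0 (- i) 0),
     pclass (P6 0 0 0 b (i * a) 0), pclass (P6 0 0 0 b (- (i * a)) 0)}"
    unfolding IP eqs eqs2 Z E_vals using a0 d0 i0 aa0 b0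
    by (simp add: image_Un pclass_image insert_commute)
  have card: "card (pclass ` intersection_pts \<alpha>) = 20"
    unfolding img using a0 d0 i0 aa0 b0
    by (simp add: pclass_eq_iff peq_P6)
  show ?thesis using card P1 P2 Z by simp
qed

end
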